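(* The following two conditions on $P$ are equivalent: (a) there is a measurable set $A\subset\Lambda$ of positive measure such that for every $x_N\in A$ there is a constant $\gamma(x_N)>0$ with $P(\cdot,x_N)\ge\gamma(x_N)\rho^{(N-1)}$ a.e. on $\Lambda^{N-1}$; (b) there is a measurable set $A\subset\Lambda$ of positive measure and a measurable function $\gamma:A\to(0,\infty)$ such that $P(x_1,\dots,x_N)\ge\rho^{(N-1)}(x_1,\dots,x_{N-1})\gamma(x_N)$ for a.e. $(x_1,\dots,x_N)\in\Lambda^{N-1}\times A$.
   Context: $(\Lambda;dx)$ is a complete $\sigma$-finite measure space with non-zero measure $dx$; $d^kx$ denotes the completion of $dx^{\otimes k}$ on $\Lambda^k$, and "a.e." refers to these measures. $N\ge2$ and $P$ is a symmetric probability density on $\Lambda^N$: a nonnegative, measurable, symmetric function with $\int_{\Lambda^N}P\,d^Nx=1$. The marginal density is $\rho^{(N-1)}(x_1,\dots,x_{N-1}):=\int_{\Lambda}P(x_1,\dots,x_{N-1},x_N)\,dx_N$ (defined a.e. on $\Lambda^{N-1}$). *)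

theory Defs
  imports "HOL-Analysis.Analysis" "HOL-Combinatorics.Permutations"
begin

definition powM :: "'a measure \<Rightarrow> nat \<Rightarrow> (nat \<Rightarrow> 'a) measure" where
  "powM M k = completion (PiM {..<k} (\<lambda>_. M))"

text \<open>Marginal density rho^(N-1)(y) = integral of P(y, x_N) dx_N, where the
  point (y, t) of Lambda^N is y(N-1 := t).\<close>
definition marginal :: "'a measure \<Rightarrow> nat \<Rightarrow> ((nat \<Rightarrow> 'a) \<Rightarrow> real) \<Rightarrow> (nat \<Rightarrow> 'a) \<Rightarrow> ennreal" where
  "marginal M N P y = (\<integral>\<^sup>+ t. ennreal (P (y(N - 1 := t))) \<partial>M)"

definition sym_density :: "'a measure \<Rightarrow> nat \<Rightarrow> ((nat \<Rightarrow> 'a) \<Rightarrow> real) \<Rightarrow> bool" where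
  "sym_density M N P \<longleftrightarrow>
     P \<in> borel_measurable (powM M N) \<and>
     (\<forall>x\<in>space (powM M N). 0 \<le> P x) \<and>
     (\<forall>\<sigma> x. \<sigma> permutes {..<N} \<longrightarrow> x \<in> space (powM M N) \<longrightarrow> P (\<lambda>i. x (\<sigma> i)) = P x) \<and>
     (\<integral>\<^sup>+ x. ennreal (P x) \<partial>powM M N) = 1"

end

theory Submission
  imports Defs
begin

lemma set1:
  assumes A: "\<And>i. i \<in> {..<Suc n} \<Longrightarrow> A i \<subseteq> space M"
  shows "(\<lambda>(y,t). y(n:=t)) -` PiE {..<Suc n} A \<inter> (PiE {..<n} (\<lambda>_. space M) \<times> space M) = PiE {..<n} A \<times> A n"
proof (intro set_eqI iffI)
  fix p assume p: "p \<in> (\<lambda>(y,t). y(n:=t)) -` PiE {..<Suc n} A \<inter> (PiE {..<n} (\<lambda>_. space M) \<times> space M)"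
  obtain y t where [simp]: "p = (y,t)" by fastforce
  from p have y: "y \<in> PiE {..<n} (\<lambda>_. space M)" and u: "y(n:=t) \<in> PiE {..<Suc n} A" by auto
  have "y \<in> PiE {..<n} A"
  proof (rule PiE_I)
    fix i assume "i \<in> {..<n}" then show "y i \<in> A i" using PiE_mem[OF u, of i] by auto
  next
    fix i assume "i \<notin> {..<n}" then show "y i = undefined" using y by (auto simp: PiE_def extensional_def)
  qed
  moreover have "t \<in> A n" using PiE_mem[OF u, of n] by auto
  ultimately show "p \<in> PiE {..<n} A \<times> A n" by simp
next
  fix p assume p: "p \<in> PiE {..<n} A \<times> A n"
  obtain y t where [simp]: "p = (y,t)" by fastforce
  from p have y: "y \<in> PiE {..<n} A" and t: "t \<in> A n" by auto
  have "y(n:=t) \<in> PiE {..<Suc n} A"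
  proof (rule PiE_I)
    fix i assume "i \<in> {..<Suc n}" then show "(y(n:=t)) i \<in> A i" using y t by (auto simp: less_Suc_eq)
  next
    fix i assume "i \<notin> {..<Suc n}" then show "(y(n:=t)) i = undefined" using y by (auto simp: PiE_def extensional_def)
  qed
  moreover have "y \<in> PiE {..<n} (\<lambda>_. space M)" using PiE_mono[of "{..<n}" A "\<lambda>_. space M"] y A by auto
  moreover have "t \<in> space M" using t A by auto
  ultimately show "p \<in> (\<lambda>(y,t). y(n:=t)) -` PiE {..<Suc n} A \<inter> (PiE {..<n} (\<lambda>_. space M) \<times> space M)" by simp
qed

lemma set2:
  assumes A: "\<And>i. i \<in> {..<Suc n} \<Longrightarrow> A i \<subseteq> space M"
  shows "(\<lambda>(t,y). y(n:=t)) -` PiE {..<Suc n} A \<inter> (space M \<times> PiE {..<n} (\<lambda>_. space M)) = A n \<times> PiE {..<n} A"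
proof (intro set_eqI iffI)
  fix p assume p: "p \<in> (\<lambda>(t,y). y(n:=t)) -` PiE {..<Suc n} A \<inter> (space M \<times> PiE {..<n} (\<lambda>_. space M))"
  obtain y t where [simp]: "p = (t,y)" by fastforce
  from p have y: "y \<in> PiE {..<n} (\<lambda>_. space M)" and u: "y(n:=t) \<in> PiE {..<Suc n} A" by auto
  have "y \<in> PiE {..<n} A"
  proof (rule PiE_I)
    fix i assume "i \<in> {..<n}" then show "y i \<in> A i" using PiE_mem[OF u, of i] by auto
  next
    fix i assume "i \<notin> {..<n}" then show "y i = undefined" using y by (auto simp: PiE_def extensional_def)
  qed
  moreover have "t \<in> A n" using PiE_mem[OF u, of n] by auto
  ultimately show "p \<in> A n \<times> PiE {..<n} A" by simp
next
  fix p assume p: "p \<in> A n \<times> PiE {..<n} A"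
  obtain y t where [simp]: "p = (t,y)" by fastforce
  from p have y: "y \<in> PiE {..<n} A" and t: "t \<in> A n" by auto
  have "y(n:=t) \<in> PiE {..<Suc n} A"
  proof (rule PiE_I)
    fix i assume "i \<in> {..<Suc n}" then show "(y(n:=t)) i \<in> A i" using y t by (auto simp: less_Suc_eq)
  next
    fix i assume "i \<notin> {..<Suc n}" then show "(y(n:=t)) i = undefined" using y by (auto simp: PiE_def extensional_def)
  qed
  moreover have "y \<in> PiE {..<n} (\<lambda>_. space M)" using PiE_mono[of "{..<n}" A "\<lambda>_. space M"] y A by auto
  moreover have "t \<in> space M" using t A by auto
  ultimately show "p \<in> (\<lambda>(t,y). y(n:=t)) -` PiE {..<Suc n} A \<inter> (space M \<times> PiE {..<n} (\<lambda>_. space M))" by simp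
qed

lemma meas1: "(\<lambda>(y,t). y(n:=t)) \<in> measurable (PiM {..<n} (\<lambda>_. M) \<Otimes>\<^sub>M M) (PiM {..<Suc n} (\<lambda>_. M))"
proof -
  have ins: "{..<Suc n} = insert n {..<n}" by auto
  show ?thesis unfolding ins using measurable_add_dim[of n "{..<n}" "\<lambda>_. M"] by simp
qed

lemma meas2: "(\<lambda>(t,y). y(n:=t)) \<in> measurable (M \<Otimes>\<^sub>M PiM {..<n} (\<lambda>_. M)) (PiM {..<Suc n} (\<lambda>_. M))"
proof -
  have ins: "{..<Suc n} = {..<n} \<union> {n}" by auto
  have e: "(\<lambda>(t,y). y(n:=t)) = (\<lambda>x. (snd x)(n := fst x))" by auto
  show ?thesis unfolding e by (rule measurable_fun_upd[OF ins]) auto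
qed

lemma iso1:
  assumes sf: "sigma_finite_measure M"
  shows "distr (PiM {..<n} (\<lambda>_. M) \<Otimes>\<^sub>M M) (PiM {..<Suc n} (\<lambda>_. M)) (\<lambda>(y,t). y(n:=t)) = PiM {..<Suc n} (\<lambda>_. M)"
proof -
  interpret product_sigma_finite "\<lambda>_. M" by (simp add: product_sigma_finite_def sf)
  interpret I: finite_product_sigma_finite "\<lambda>_. M" "{..<n}" by standard simp
  interpret S: sigma_finite_measure M by (rule sf)
  show ?thesis
  proof (rule PiM_eqI)
    fix A assume A: "\<And>i. i \<in> {..<Suc n} \<Longrightarrow> A i \<in> sets M"
    have *: "(\<lambda>(y,t). y(n:=t)) -` PiE {..<Suc n} A \<inter> space (PiM {..<n} (\<lambda>_. M) \<Otimes>\<^sub>M M) = PiE {..<n} A \<times> A n"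
      unfolding space_pair_measure space_PiM using A[THEN sets.sets_into_space] by (intro set1) auto
    show "emeasure (distr (PiM {..<n} (\<lambda>_. M) \<Otimes>\<^sub>M M) (PiM {..<Suc n} (\<lambda>_. M)) (\<lambda>(y,t). y(n:=t))) (PiE {..<Suc n} A) = (\<Prod>i\<in>{..<Suc n}. emeasure M (A i))"
    proof -
      have m: "emeasure (PiM {..<n} (\<lambda>_. M)) (PiE {..<n} A) = (\<Prod>i<n. emeasure M (A i))"
        by (rule I.measure_times) (use A in auto)
      show ?thesis
        using A by (subst emeasure_distr[OF meas1]) (auto simp: * sigma_finite_measure.emeasure_pair_measure_Times[OF sf] m mult.commute sets_PiM_I_finite)
    qed
  qed simp_all
qed

lemma iso2:
  assumes sf: "sigma_finite_measure M"
  shows "distr (M \<Otimes>\<^sub>M PiM {..<n} (\<lambda>_. M)) (PiM {..<Suc n} (\<lambda>_. M)) (\<lambda>(t,y). y(n:=t)) = PiM {..<Suc n} (\<lambda>_. M)"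
proof -
  interpret product_sigma_finite "\<lambda>_. M" by (simp add: product_sigma_finite_def sf)
  interpret I: finite_product_sigma_finite "\<lambda>_. M" "{..<n}" by standard simp
  interpret S: sigma_finite_measure M by (rule sf)
  show ?thesis
  proof (rule PiM_eqI)
    fix A assume A: "\<And>i. i \<in> {..<Suc n} \<Longrightarrow> A i \<in> sets M"
    have *: "(\<lambda>(t,y). y(n:=t)) -` PiE {..<Suc n} A \<inter> space (M \<Otimes>\<^sub>M PiM {..<n} (\<lambda>_. M)) = A n \<times> PiE {..<n} A"
      unfolding space_pair_measure space_PiM using A[THEN sets.sets_into_space] by (intro set2) auto
    show "emeasure (distr (M \<Otimes>\<^sub>M PiM {..<n} (\<lambda>_. M)) (PiM {..<Suc n} (\<lambda>_. M)) (\<lambda>(t,y). y(n:=t))) (PiE {..<Suc n} A) = (\<Prod>i\<in>{..<Suc n}. emeasure M (A i))"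
    proof -
      have m: "emeasure (PiM {..<n} (\<lambda>_. M)) (PiE {..<n} A) = (\<Prod>i<n. emeasure M (A i))"
        by (rule I.measure_times) (use A in auto)
      show ?thesis
        using A by (subst emeasure_distr[OF meas2]) (auto simp: * I.emeasure_pair_measure_Times m mult.commute)
    qed
  qed simp_all
qed


lemma T_yt:
  assumes sf: "sigma_finite_measure M" and H: "AE x in PiM {..<Suc n} (\<lambda>_. M). Q x"
  shows "AE y in PiM {..<n} (\<lambda>_. M). AE t in M. Q (y(n:=t))"
proof -
  interpret product_sigma_finite "\<lambda>_. M" by (simp add: product_sigma_finite_def sf)
  interpret I: finite_product_sigma_finite "\<lambda>_. M" "{..<n}" by standard simp
  interpret P: pair_sigma_finite "PiM {..<n} (\<lambda>_. M)" M
    by (intro pair_sigma_finite.intro sf) (rule I.sigma_finite_measure_axioms)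
  have "AE p in PiM {..<n} (\<lambda>_. M) \<Otimes>\<^sub>M M. Q ((\<lambda>(y,t). y(n:=t)) p)"
    by (rule AE_distrD[OF meas1]) (subst iso1[OF sf], rule H)
  from P.AE_pair[OF this] show ?thesis by simp
qed

lemma T_ty:
  assumes sf: "sigma_finite_measure M" and H: "AE x in PiM {..<Suc n} (\<lambda>_. M). Q x"
  shows "AE t in M. AE y in PiM {..<n} (\<lambda>_. M). Q (y(n:=t))"
proof -
  interpret product_sigma_finite "\<lambda>_. M" by (simp add: product_sigma_finite_def sf)
  interpret I: finite_product_sigma_finite "\<lambda>_. M" "{..<n}" by standard simp
  interpret P: pair_sigma_finite M "PiM {..<n} (\<lambda>_. M)"
    by (intro pair_sigma_finite.intro sf) (rule I.sigma_finite_measure_axioms)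
  have "AE p in M \<Otimes>\<^sub>M PiM {..<n} (\<lambda>_. M). Q ((\<lambda>(t,y). y(n:=t)) p)"
    by (rule AE_distrD[OF meas2]) (subst iso2[OF sf], rule H)
  from P.AE_pair[OF this] show ?thesis by simp
qed

lemma T_back:
  assumes sf: "sigma_finite_measure M"
    and S: "{x \<in> space (PiM {..<Suc n} (\<lambda>_. M)). Q x} \<in> sets (PiM {..<Suc n} (\<lambda>_. M))"
    and H: "AE t in M. AE y in PiM {..<n} (\<lambda>_. M). Q (y(n:=t))"
  shows "AE x in PiM {..<Suc n} (\<lambda>_. M). Q x"
proof -
  interpret product_sigma_finite "\<lambda>_. M" by (simp add: product_sigma_finite_def sf)
  interpret I: finite_product_sigma_finite "\<lambda>_. M" "{..<n}" by standard simp
  interpret P: pair_sigma_finite M "PiM {..<n} (\<lambda>_. M)"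
    by (intro pair_sigma_finite.intro sf) (rule I.sigma_finite_measure_axioms)
  have S2: "{p \<in> space (M \<Otimes>\<^sub>M PiM {..<n} (\<lambda>_. M)). Q ((\<lambda>(t,y). y(n:=t)) p)} \<in> sets (M \<Otimes>\<^sub>M PiM {..<n} (\<lambda>_. M))"
  proof -
    have "{p \<in> space (M \<Otimes>\<^sub>M PiM {..<n} (\<lambda>_. M)). Q ((\<lambda>(t,y). y(n:=t)) p)} =
       (\<lambda>(t,y). y(n:=t)) -` {x \<in> space (PiM {..<Suc n} (\<lambda>_. M)). Q x} \<inter> space (M \<Otimes>\<^sub>M PiM {..<n} (\<lambda>_. M))"
      using measurable_space[OF meas2] by blast
    also have "\<dots> \<in> sets (M \<Otimes>\<^sub>M PiM {..<n} (\<lambda>_. M))"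
      by (rule measurable_sets[OF meas2 S])
    finally show ?thesis .
  qed
  have "AE p in M \<Otimes>\<^sub>M PiM {..<n} (\<lambda>_. M). Q ((\<lambda>(t,y). y(n:=t)) p)"
    by (rule P.AE_pair_measure[OF S2]) (simp add: H)
  then have "AE x in distr (M \<Otimes>\<^sub>M PiM {..<n} (\<lambda>_. M)) (PiM {..<Suc n} (\<lambda>_. M)) (\<lambda>(t,y). y(n:=t)). Q x"
    by (subst AE_distr_iff[OF meas2 S])
  then show ?thesis by (subst (asm) iso2[OF sf])
qed

lemma restrict_space_id: "y \<in> space (PiM I M') \<Longrightarrow> restrict y I = y"
  by (auto simp: space_PiM restrict_def PiE_def extensional_def fun_eq_iff)

lemma restrict_upd: "(y::nat\<Rightarrow>_) \<in> space (PiM {..<n} (\<lambda>_. M)) \<Longrightarrow> restrict (y(n:=t)) {..<n} = y"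
  unfolding space_PiM PiE_def extensional_def restrict_def fun_eq_iff by simp

lemma T_snd:
  assumes sf: "sigma_finite_measure M" and H: "AE y in PiM {..<n} (\<lambda>_. M). R y"
  shows "AE x in PiM {..<Suc n} (\<lambda>_. M). R (restrict x {..<n})"
proof -
  obtain Z where Z: "{y \<in> space (PiM {..<n} (\<lambda>_. M)). \<not> R y} \<subseteq> Z" "emeasure (PiM {..<n} (\<lambda>_. M)) Z = 0"
     "Z \<in> sets (PiM {..<n} (\<lambda>_. M))" using H by (rule AE_E)
  have rm: "(\<lambda>x. restrict x {..<n}) \<in> measurable (PiM {..<Suc n} (\<lambda>_. M)) (PiM {..<n} (\<lambda>_. M))"
    by (rule measurable_restrict_subset) auto
  have S: "{x \<in> space (PiM {..<Suc n} (\<lambda>_. M)). restrict x {..<n} \<notin> Z} \<in> sets (PiM {..<Suc n} (\<lambda>_. M))"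
  proof -
    have "{x \<in> space (PiM {..<Suc n} (\<lambda>_. M)). restrict x {..<n} \<notin> Z} = space (PiM {..<Suc n} (\<lambda>_. M)) -
       ((\<lambda>x. restrict x {..<n}) -` Z \<inter> space (PiM {..<Suc n} (\<lambda>_. M)))" by blast
    also have "\<dots> \<in> sets (PiM {..<Suc n} (\<lambda>_. M))"
      using measurable_sets[OF rm Z(3)] by blast
    finally show ?thesis .
  qed
  have Zn: "Z \<in> null_sets (PiM {..<n} (\<lambda>_. M))" using Z by auto
  have "AE x in PiM {..<Suc n} (\<lambda>_. M). restrict x {..<n} \<notin> Z"
  proof (rule T_back[OF sf S])
    show "AE t in M. AE y in PiM {..<n} (\<lambda>_. M). restrict (y(n := t)) {..<n} \<notin> Z"
      by (rule AE_I2, rule AE_mp[OF AE_not_in[OF Zn]], rule AE_I2) (simp add: restrict_upd restrict_space_id)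
  qed
  then show ?thesis
  proof (rule AE_mp, intro AE_I2 impI)
    fix x assume "x \<in> space (PiM {..<Suc n} (\<lambda>_. M))" "restrict x {..<n} \<notin> Z"
    moreover have "restrict x {..<n} \<in> space (PiM {..<n} (\<lambda>_. M))"
      using measurable_space[OF rm] calculation(1) .
    ultimately show "R (restrict x {..<n})" using Z(1) by blast
  qed
qed


lemma sets_AE_section:
  assumes "pair_sigma_finite M1 M2"
    and C: "{p \<in> space (M1 \<Otimes>\<^sub>M M2). Q (fst p) (snd p)} \<in> sets (M1 \<Otimes>\<^sub>M M2)"
  shows "{x \<in> space M1. AE y in M2. Q x y} \<in> sets M1"
proof -
  interpret pair_sigma_finite M1 M2 by fact
  let ?C = "{p \<in> space (M1 \<Otimes>\<^sub>M M2). \<not> Q (fst p) (snd p)}"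
  have Cs: "?C \<in> sets (M1 \<Otimes>\<^sub>M M2)" using C by (rule sets.sets_Collect_neg)
  have eq: "(AE y in M2. Q x y) \<longleftrightarrow> emeasure M2 (Pair x -` ?C) = 0" if "x \<in> space M1" for x
    by (rule AE_iff_measurable[OF sets_Pair1[OF Cs]]) (use that in \<open>auto simp: space_pair_measure\<close>)
  have "{x \<in> space M1. AE y in M2. Q x y} = {x\<in>space M1. emeasure M2 (Pair x -` ?C) = 0}" using eq by blast
  also have "\<dots> \<in> sets M1"
    by (rule borel_measurable_eq[OF measurable_emeasure_Pair1[OF Cs]]) simp
  finally show ?thesis .
qed

theorem mainTheorem9:
  fixes M :: "'a measure" and N :: nat and P :: "(nat \<Rightarrow> 'a) \<Rightarrow> real"
  assumes "complete_measure M" and "sigma_finite_measure M"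
    and "emeasure M (space M) \<noteq> 0"
    and "N \<ge> 2"
    and "sym_density M N P"
  shows "(\<exists>A \<in> sets M. emeasure M A > 0 \<and>
            (\<forall>xN\<in>A. \<exists>\<gamma>::real. \<gamma> > 0 \<and>
               (AE y in powM M (N - 1).
                  ennreal (P (y(N - 1 := xN))) \<ge> ennreal \<gamma> * marginal M N P y)))
     \<longleftrightarrow>
         (\<exists>A \<in> sets M. emeasure M A > 0 \<and>
            (\<exists>\<gamma> :: 'a \<Rightarrow> real. \<gamma> \<in> borel_measurable (restrict_space M A) \<and>
               (\<forall>t\<in>A. \<gamma> t > 0) \<and>
               (AE x in powM M N. x (N - 1) \<in> A \<longrightarrow>
                  ennreal (P x) \<ge> marginal M N P (restrict x {..<N - 1}) * ennreal (\<gamma> (x (N - 1))))))"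
proof -
  note sf = assms(2)
  interpret S: sigma_finite_measure M by (rule sf)
  obtain n where N: "N = Suc n" using assms(4) by (cases N) auto
  interpret product_sigma_finite "\<lambda>_::nat. M" by (simp add: product_sigma_finite_def sf)
  interpret I: finite_product_sigma_finite "\<lambda>_::nat. M" "{..<n}" by standard simp
  interpret PP: pair_sigma_finite M "PiM {..<n} (\<lambda>_::nat. M)"
    by (intro pair_sigma_finite.intro sf) (rule I.sigma_finite_measure_axioms)
  let ?Pi = "PiM {..<n} (\<lambda>_::nat. M)"
  let ?Pi' = "PiM {..<Suc n} (\<lambda>_::nat. M)"
  have e1: "N - 1 = n" using N by simp
  have e2: "powM M n = completion ?Pi" by (simp add: powM_def)
  have e3: "powM M N = completion ?Pi'" by (simp add: powM_def N)
  have Pm: "P \<in> borel_measurable (completion ?Pi')"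
    using assms(5) by (simp add: sym_density_def powM_def N)
  obtain P' where P'm: "P' \<in> borel_measurable ?Pi'" and PP': "AE x in ?Pi'. P x = P' x"
    using completion_ex_borel_measurable_real[OF Pm] by blast
  define \<rho> where "\<rho> = marginal M N P"
  have \<rho>_eq: "\<And>y. \<rho> y = (\<integral>\<^sup>+ t. ennreal (P (y(n:=t))) \<partial>M)" by (simp add: \<rho>_def marginal_def N)
  define \<rho>' where "\<rho>' = (\<lambda>y. \<integral>\<^sup>+ t. ennreal (P' (y(n:=t))) \<partial>M)"
  have P'e: "(\<lambda>x. ennreal (P' x)) \<in> borel_measurable ?Pi'" using P'm by simp
  have \<rho>'m: "\<rho>' \<in> borel_measurable ?Pi"
    unfolding \<rho>'_def
    using S.borel_measurable_nn_integral_fst[OF measurable_compose[OF meas1 P'e]] by (simp add: split_beta')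
  have \<rho>\<rho>': "AE y in ?Pi. \<rho> y = \<rho>' y"
  proof (rule AE_mp[OF T_yt[OF sf PP']], intro AE_I2 impI)
    fix y assume "y \<in> space ?Pi" "AE t in M. P (y(n := t)) = P' (y(n := t))"
    then have "AE t in M. ennreal (P (y(n := t))) = ennreal (P' (y(n := t)))" by (auto elim: AE_mp)
    then show "\<rho> y = \<rho>' y" unfolding \<rho>_eq \<rho>'_def by (rule nn_integral_cong_AE)
  qed
  have rm: "(\<lambda>x. restrict x {..<n}) \<in> measurable ?Pi' ?Pi"
    by (rule measurable_restrict_subset) auto
  have cm: "(\<lambda>x. x n) \<in> measurable ?Pi' M"
    by (rule measurable_component_singleton) simp
  show ?thesis
    unfolding e1 e2 e3 AE_completion_iff \<rho>_def[symmetric]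
  proof (intro iffI)
    assume "\<exists>A\<in>sets M. 0 < emeasure M A \<and> (\<forall>xN\<in>A. \<exists>\<gamma>>0. AE y in ?Pi. ennreal \<gamma> * \<rho> y \<le> ennreal (P (y(n := xN))))"
    then obtain A where A: "A \<in> sets M" "0 < emeasure M A"
      and HA: "\<And>xN. xN\<in>A \<Longrightarrow> \<exists>\<gamma>>0. AE y in ?Pi. ennreal \<gamma> * \<rho> y \<le> ennreal (P (y(n := xN)))" by blast
    have good: "AE t in M. AE y in ?Pi. P (y(n:=t)) = P' (y(n:=t)) \<and> \<rho> y = \<rho>' y"
    proof (rule AE_mp[OF T_ty[OF sf PP']], rule AE_I2, rule impI)
      fix t assume "t \<in> space M" "AE y in ?Pi. P (y(n := t)) = P' (y(n := t))"
      from this(2) show "AE y in ?Pi. P (y(n:=t)) = P' (y(n:=t)) \<and> \<rho> y = \<rho>' y"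
        using \<rho>\<rho>' by eventually_elim simp
    qed
    obtain Z0 where Z0: "\<And>t. t \<in> space M - Z0 \<Longrightarrow> AE y in ?Pi. P (y(n:=t)) = P' (y(n:=t)) \<and> \<rho> y = \<rho>' y"
      "Z0 \<in> null_sets M" using AE_E3[OF good] by blast
    define A' where "A' = A - Z0"
    have A's: "A' \<in> sets M" using A Z0 by (auto simp: A'_def)
    have A'm: "emeasure M A' = emeasure M A" unfolding A'_def by (rule emeasure_Diff_null_set[OF Z0(2) A(1)])
    define q where "q = (\<lambda>k::nat. inverse (real (Suc k)))"
    define Sk where "Sk = (\<lambda>k. {t \<in> space M. AE y in ?Pi. ennreal (q k) * \<rho>' y \<le> ennreal (P' (y(n:=t)))})"
    have f1[measurable]: "(\<lambda>p. ennreal (P' ((snd p)(n := fst p)))) \<in> borel_measurable (M \<Otimes>\<^sub>M ?Pi)"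
      using measurable_compose[OF meas2 P'e] by (simp add: split_beta')
    have f2[measurable]: "(\<lambda>p. \<rho>' (snd p)) \<in> borel_measurable (M \<Otimes>\<^sub>M ?Pi)"
      using \<rho>'m by measurable
    have Sks[measurable]: "Sk k \<in> sets M" for k
      unfolding Sk_def by (rule sets_AE_section[OF PP.pair_sigma_finite_axioms]) measurable
    have ex: "\<exists>k. t \<in> Sk k" if t: "t \<in> A'" for t
    proof -
      have tA: "t \<in> A" and tsp: "t \<in> space M - Z0" using t A(1) sets.sets_into_space by (auto simp: A'_def)
      obtain \<gamma> where g: "\<gamma> > 0" "AE y in ?Pi. ennreal \<gamma> * \<rho> y \<le> ennreal (P (y(n := t)))" using HA[OF tA] by blast
      obtain k where k: "inverse (real (Suc k)) < \<gamma>" using reals_Archimedean[OF g(1)] by blast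
      have "AE y in ?Pi. ennreal (q k) * \<rho>' y \<le> ennreal (P' (y(n:=t)))"
        using g(2) Z0(1)[OF tsp]
      proof eventually_elim
        case (elim y)
        have "ennreal (q k) * \<rho>' y \<le> ennreal \<gamma> * \<rho>' y"
          using k by (intro mult_right_mono ennreal_leI) (auto simp: q_def)
        then show ?case using elim by simp
      qed
      then show ?thesis using tsp by (auto simp: Sk_def)
    qed
    define g where "g = (\<lambda>t. q (LEAST k. t \<in> Sk k))"
    have gpos: "g t > 0" for t by (simp add: g_def q_def)
    have ggood: "AE y in ?Pi. ennreal (g t) * \<rho>' y \<le> ennreal (P' (y(n:=t)))" if "t \<in> A'" for t
    proof -
      obtain L where L: "L = (LEAST k. t \<in> Sk k)" by simp
      have "t \<in> Sk L" unfolding L by (rule LeastI_ex[OF ex[OF that]])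
      then have "AE y in ?Pi. ennreal (q L) * \<rho>' y \<le> ennreal (P' (y(n:=t)))" by (simp add: Sk_def)
      then show ?thesis by (simp add: g_def L)
    qed
    have Lm: "(\<lambda>t. LEAST k. t \<in> Sk k) \<in> measurable M (count_space UNIV)"
      by measurable
    have gm: "g \<in> borel_measurable M"
      unfolding g_def by (rule measurable_compose[OF Lm]) (simp add: measurable_count_space_eq1)
    have K: "AE x in ?Pi'. x n \<in> A' \<longrightarrow> \<rho>' (restrict x {..<n}) * ennreal (g (x n)) \<le> ennreal (P' x)"
    proof (rule T_back[OF sf])
      show "{x \<in> space ?Pi'. x n \<in> A' \<longrightarrow> \<rho>' (restrict x {..<n}) * ennreal (g (x n)) \<le> ennreal (P' x)} \<in> sets ?Pi'"
      proof -
        have h1[measurable]: "(\<lambda>x. \<rho>' (restrict x {..<n})) \<in> borel_measurable ?Pi'"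
          by (rule measurable_compose[OF rm \<rho>'m])
        have h0: "(\<lambda>x. g (x n)) \<in> borel_measurable ?Pi'"
          by (rule measurable_compose[OF cm gm])
        have h2[measurable]: "(\<lambda>x. ennreal (g (x n))) \<in> borel_measurable ?Pi'"
          using h0 by measurable
        have h3[measurable]: "(\<lambda>x. x n) \<in> measurable ?Pi' M" by (rule cm)
        have h4: "(\<lambda>x. \<rho>' (restrict x {..<n}) * ennreal (g (x n))) \<in> borel_measurable ?Pi'"
          using h1 h2 by (rule borel_measurable_times_ennreal)
        have "{x \<in> space ?Pi'. x n \<in> A' \<longrightarrow> \<rho>' (restrict x {..<n}) * ennreal (g (x n)) \<le> ennreal (P' x)}
           = (space ?Pi' - ((\<lambda>x. x n) -` A' \<inter> space ?Pi')) \<union> {x \<in> space ?Pi'. \<rho>' (restrict x {..<n}) * ennreal (g (x n)) \<le> ennreal (P' x)}"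
          by blast
        also have "\<dots> \<in> sets ?Pi'"
          using measurable_sets[OF cm A's] borel_measurable_le[OF h4 P'e] by blast
        finally show ?thesis .
      qed
      show "AE t in M. AE y in ?Pi. (y(n:=t)) n \<in> A' \<longrightarrow> \<rho>' (restrict (y(n:=t)) {..<n}) * ennreal (g ((y(n:=t)) n)) \<le> ennreal (P' (y(n:=t)))"
      proof (rule AE_I2)
        fix t assume "t \<in> space M"
        show "AE y in ?Pi. (y(n:=t)) n \<in> A' \<longrightarrow> \<rho>' (restrict (y(n:=t)) {..<n}) * ennreal (g ((y(n:=t)) n)) \<le> ennreal (P' (y(n:=t)))"
        proof (cases "t \<in> A'")
          case True
          show ?thesis using ggood[OF True]
            by (rule AE_mp, intro AE_I2) (simp add: restrict_upd restrict_space_id mult.commute)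
        qed simp
      qed
    qed
    show "\<exists>A\<in>sets M. 0 < emeasure M A \<and> (\<exists>\<gamma>. \<gamma> \<in> borel_measurable (restrict_space M A) \<and> (\<forall>t\<in>A. 0 < \<gamma> t) \<and>
           (AE x in ?Pi'. x n \<in> A \<longrightarrow> \<rho> (restrict x {..<n}) * ennreal (\<gamma> (x n)) \<le> ennreal (P x)))"
    proof (intro bexI conjI exI)
      show "0 < emeasure M A'" using A'm A(2) by simp
      show "g \<in> borel_measurable (restrict_space M A')" by (rule measurable_restrict_space1[OF gm])
      show "\<forall>t\<in>A'. 0 < g t" using gpos by simp
      show "AE x in ?Pi'. x n \<in> A' \<longrightarrow> \<rho> (restrict x {..<n}) * ennreal (g (x n)) \<le> ennreal (P x)"
        using K PP' T_snd[OF sf \<rho>\<rho>'] by eventually_elim simp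
    qed (rule A's)
  next
    assume "\<exists>A\<in>sets M. 0 < emeasure M A \<and> (\<exists>\<gamma>. \<gamma> \<in> borel_measurable (restrict_space M A) \<and> (\<forall>t\<in>A. 0 < \<gamma> t) \<and>
           (AE x in ?Pi'. x n \<in> A \<longrightarrow> \<rho> (restrict x {..<n}) * ennreal (\<gamma> (x n)) \<le> ennreal (P x)))"
    then obtain A \<gamma> where A: "A \<in> sets M" "0 < emeasure M A" and gpos: "\<forall>t\<in>A. 0 < \<gamma> t"
      and H: "AE x in ?Pi'. x n \<in> A \<longrightarrow> \<rho> (restrict x {..<n}) * ennreal (\<gamma> (x n)) \<le> ennreal (P x)" by blast
    obtain Z0 where Z0: "\<And>t. t \<in> space M - Z0 \<Longrightarrow> AE y in ?Pi. (y(n:=t)) n \<in> A \<longrightarrow> \<rho> (restrict (y(n:=t)) {..<n}) * ennreal (\<gamma> ((y(n:=t)) n)) \<le> ennreal (P (y(n:=t)))"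
      "Z0 \<in> null_sets M" using AE_E3[OF T_ty[OF sf H]] by blast
    define A' where "A' = A - Z0"
    have A's: "A' \<in> sets M" using A Z0 by (auto simp: A'_def)
    have A'm: "emeasure M A' = emeasure M A" unfolding A'_def by (rule emeasure_Diff_null_set[OF Z0(2) A(1)])
    show "\<exists>A\<in>sets M. 0 < emeasure M A \<and> (\<forall>xN\<in>A. \<exists>\<gamma>>0. AE y in ?Pi. ennreal \<gamma> * \<rho> y \<le> ennreal (P (y(n := xN))))"
    proof (intro bexI conjI ballI)
      show "0 < emeasure M A'" using A'm A(2) by simp
      fix xN assume xN: "xN \<in> A'"
      then have xN2: "xN \<in> space M - Z0" "xN \<in> A" using A(1) sets.sets_into_space by (auto simp: A'_def)
      show "\<exists>\<gamma>>0. AE y in ?Pi. ennreal \<gamma> * \<rho> y \<le> ennreal (P (y(n := xN)))"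
      proof (intro exI conjI)
        show "0 < \<gamma> xN" using gpos xN2 by simp
        show "AE y in ?Pi. ennreal (\<gamma> xN) * \<rho> y \<le> ennreal (P (y(n := xN)))"
          using Z0(1)[OF xN2(1)] by (rule AE_mp, intro AE_I2) (use xN2 in \<open>simp add: restrict_upd restrict_space_id mult.commute\<close>)
      qed
    qed (rule A's)
  qed
qed

end
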